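(* The category of exact $\mathfrak{K}$-modules $M$ with $\alpha_{12}=0$ and $\alpha_{21}=0$ is equivalent to the category of $\mathbb{Z}/2$-graded cohomologically trivial $\mathfrak{S}$-modules, via $M\mapsto(M_0,t_0)$. A homomorphism $f_0\colon M_0\to L_0$ between two $\mathbb{Z}/2$-graded cohomologically trivial $\mathfrak{S}$-modules induces an injective or surjective homomorphism of exact $\mathfrak{K}$-modules if and only if $f_0$ is injective or surjective, respectively.
   Context: Fix a prime $p$, $N(x)=1+x+\dots+x^{p-1}$, $\mathfrak{S}=\mathbb{Z}[t]/(t^p-1)$. A $\mathfrak{K}$-module $M$ amounts to $\mathbb{Z}/2$-graded abelian groups $M_0,M_1,M_2$ with homomorphisms $\alpha_{jk}\colon M_k\to M_j$ ($j\neq k$; $\alpha_{12},\alpha_{21}$ grading-reversing, others grading-preserving) with $\alpha_{jk}\alpha_{km}=0$ for $\{j,k,m\}=\{0,1,2\}$ and, for $t_0:=1-\alpha_{02}\alpha_{20}$ on $M_0$, $s_1:=1-\alpha_{12}\alpha_{21}$ on $M_1$, $t_2:=1-\alpha_{20}\alpha_{02}$, $s_2:=1-\alpha_{21}\alpha_{12}$ on $M_2$: $\alpha_{01}\alpha_{10}=N(t_0)$, $\alpha_{10}\alpha_{01}=N(s_1)$, $N(t_2)+N(s_2)=p$; morphisms are triples of grading-preserving maps commuting with all $\alpha_{jk}$. $M$ is exact if the cyclic sequences $M_0\xrightarrow{\alpha_{10}}M_1\xrightarrow{\alpha_{21}}M_2\xrightarrow{\alpha_{02}}M_0$ and $M_0\xrightarrow{\alpha_{20}}M_2\xrightarrow{\alpha_{12}}M_1\xrightarrow{\alpha_{01}}M_0$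 are exact. An $\mathfrak{S}$-module is cohomologically trivial if $\ker(1-t)=\operatorname{im}N(t)$ and $\operatorname{im}(1-t)=\ker N(t)$. *)

theory Defs
  imports "HOL-Computational_Algebra.Primes"
begin

text \<open>Vertices 0,1,2 of the quiver; degrees of the Z/2-grading are encoded as bool
  (False = even degree 0, True = odd degree 1).  A Z/2-graded abelian group is given by
  two subgroups (one per degree) of an ambient abelian group type; graded maps are
  given degreewise.\<close>

datatype vtx = V0 | V1 | V2

definition subgrp :: "'a::ab_group_add set \<Rightarrow> bool" where
  "subgrp A \<longleftrightarrow> 0 \<in> A \<and> (\<forall>x\<in>A. \<forall>y\<in>A. x + y \<in> A) \<and> (\<forall>x\<in>A. - x \<in> A)"

definition addhom :: "'a::ab_group_add set \<Rightarrow> 'b::ab_group_add set \<Rightarrow> ('a \<Rightarrow> 'b) \<Rightarrow> bool" where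
  "addhom A B f \<longleftrightarrow> (\<forall>x\<in>A. f x \<in> B) \<and> (\<forall>x\<in>A. \<forall>y\<in>A. f (x + y) = f x + f y)"

definition Nop :: "nat \<Rightarrow> ('a::ab_group_add \<Rightarrow> 'a) \<Rightarrow> 'a \<Rightarrow> 'a" where
  "Nop p f x = (\<Sum>i<p. (f ^^ i) x)"

definition pmul :: "nat \<Rightarrow> 'a::ab_group_add \<Rightarrow> 'a" where
  "pmul p x = (\<Sum>i<p. x)"

fun reversing :: "vtx \<Rightarrow> vtx \<Rightarrow> bool" where
  "reversing V1 V2 = True"
| "reversing V2 V1 = True"
| "reversing _ _ = False"

definition tdeg :: "vtx \<Rightarrow> vtx \<Rightarrow> bool \<Rightarrow> bool" where
  "tdeg j k d = (if reversing j k then \<not> d else d)"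

text \<open>A (candidate) K-module: carriers C k d (vertex k, degree d) and maps
  alpha j k d : C k d -> C j (tdeg j k d).\<close>
type_synonym 'a kcar = "vtx \<Rightarrow> bool \<Rightarrow> 'a set"
type_synonym 'a kmaps = "vtx \<Rightarrow> vtx \<Rightarrow> bool \<Rightarrow> 'a \<Rightarrow> 'a"

definition acomp :: "'a kmaps \<Rightarrow> vtx \<Rightarrow> vtx \<Rightarrow> vtx \<Rightarrow> bool \<Rightarrow> 'a \<Rightarrow> 'a" where
  "acomp \<alpha> j k m d x = \<alpha> j k (tdeg k m d) (\<alpha> k m d x)"

definition t0 :: "'a::ab_group_add kmaps \<Rightarrow> bool \<Rightarrow> 'a \<Rightarrow> 'a" where
  "t0 \<alpha> d x = x - acomp \<alpha> V0 V2 V0 d x"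
definition s1 :: "'a::ab_group_add kmaps \<Rightarrow> bool \<Rightarrow> 'a \<Rightarrow> 'a" where
  "s1 \<alpha> d x = x - acomp \<alpha> V1 V2 V1 d x"
definition t2 :: "'a::ab_group_add kmaps \<Rightarrow> bool \<Rightarrow> 'a \<Rightarrow> 'a" where
  "t2 \<alpha> d x = x - acomp \<alpha> V2 V0 V2 d x"
definition s2 :: "'a::ab_group_add kmaps \<Rightarrow> bool \<Rightarrow> 'a \<Rightarrow> 'a" where
  "s2 \<alpha> d x = x - acomp \<alpha> V2 V1 V2 d x"

definition Kmod :: "nat \<Rightarrow> 'a::ab_group_add kcar \<Rightarrow> 'a kmaps \<Rightarrow> bool" where
  "Kmod p C \<alpha> \<longleftrightarrow>
     (\<forall>k d. subgrp (C k d)) \<and>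
     (\<forall>j k d. j \<noteq> k \<longrightarrow> addhom (C k d) (C j (tdeg j k d)) (\<alpha> j k d)) \<and>
     (\<forall>j k m d. j \<noteq> k \<and> k \<noteq> m \<and> j \<noteq> m \<longrightarrow> (\<forall>x\<in>C m d. acomp \<alpha> j k m d x = 0)) \<and>
     (\<forall>d. \<forall>x\<in>C V0 d. acomp \<alpha> V0 V1 V0 d x = Nop p (t0 \<alpha> d) x) \<and>
     (\<forall>d. \<forall>x\<in>C V1 d. acomp \<alpha> V1 V0 V1 d x = Nop p (s1 \<alpha> d) x) \<and>
     (\<forall>d. \<forall>x\<in>C V2 d. Nop p (t2 \<alpha> d) x + Nop p (s2 \<alpha> d) x = pmul p x)"

definition Kmor :: "'a::ab_group_add kcar \<Rightarrow> 'a kmaps \<Rightarrow> 'b::ab_group_add kcar \<Rightarrow> 'b kmaps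
                    \<Rightarrow> (vtx \<Rightarrow> bool \<Rightarrow> 'a \<Rightarrow> 'b) \<Rightarrow> bool" where
  "Kmor C \<alpha> D \<beta> f \<longleftrightarrow>
     (\<forall>k d. addhom (C k d) (D k d) (f k d)) \<and>
     (\<forall>j k d. j \<noteq> k \<longrightarrow> (\<forall>x\<in>C k d. f j (tdeg j k d) (\<alpha> j k d x) = \<beta> j k d (f k d x)))"

definition exact_at :: "'a::ab_group_add kcar \<Rightarrow> 'a kmaps \<Rightarrow> vtx \<Rightarrow> vtx \<Rightarrow> vtx \<Rightarrow> bool" where
  "exact_at C \<alpha> j k m \<longleftrightarrow>
     (\<forall>d. {x \<in> C k d. \<alpha> m k d x = 0} = \<alpha> k j (tdeg k j d) ` C j (tdeg k j d))"

definition Kexact :: "'a::ab_group_add kcar \<Rightarrow> 'a kmaps \<Rightarrow> bool" where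
  "Kexact C \<alpha> \<longleftrightarrow>
     exact_at C \<alpha> V0 V1 V2 \<and> exact_at C \<alpha> V1 V2 V0 \<and> exact_at C \<alpha> V2 V0 V1 \<and>
     exact_at C \<alpha> V0 V2 V1 \<and> exact_at C \<alpha> V2 V1 V0 \<and> exact_at C \<alpha> V1 V0 V2"

definition Ksub :: "nat \<Rightarrow> 'a::ab_group_add kcar \<Rightarrow> 'a kmaps \<Rightarrow> bool" where
  "Ksub p C \<alpha> \<longleftrightarrow> Kmod p C \<alpha> \<and> Kexact C \<alpha> \<and>
     (\<forall>d. \<forall>x\<in>C V2 d. \<alpha> V1 V2 d x = 0) \<and> (\<forall>d. \<forall>x\<in>C V1 d. \<alpha> V2 V1 d x = 0)"

definition Smod :: "nat \<Rightarrow> (bool \<Rightarrow> 'a::ab_group_add set) \<Rightarrow> (bool \<Rightarrow> 'a \<Rightarrow> 'a) \<Rightarrow> bool" where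
  "Smod p X t \<longleftrightarrow> (\<forall>d. subgrp (X d)) \<and> (\<forall>d. addhom (X d) (X d) (t d)) \<and>
     (\<forall>d. \<forall>x\<in>X d. (t d ^^ p) x = x)"

definition coh_trivial :: "nat \<Rightarrow> (bool \<Rightarrow> 'a::ab_group_add set) \<Rightarrow> (bool \<Rightarrow> 'a \<Rightarrow> 'a) \<Rightarrow> bool" where
  "coh_trivial p X t \<longleftrightarrow> (\<forall>d.
     {x \<in> X d. x - t d x = 0} = Nop p (t d) ` X d \<and>
     (\<lambda>x. x - t d x) ` X d = {x \<in> X d. Nop p (t d) x = 0})"

definition Smor :: "(bool \<Rightarrow> 'a::ab_group_add set) \<Rightarrow> (bool \<Rightarrow> 'a \<Rightarrow> 'a)
                    \<Rightarrow> (bool \<Rightarrow> 'b::ab_group_add set) \<Rightarrow> (bool \<Rightarrow> 'b \<Rightarrow> 'b) \<Rightarrow> (bool \<Rightarrow> 'a \<Rightarrow> 'b) \<Rightarrow> bool" where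
  "Smor X t Y u g \<longleftrightarrow> (\<forall>d. addhom (X d) (Y d) (g d) \<and> (\<forall>x\<in>X d. g d (t d x) = u d (g d x)))"

end

theory Submission
  imports Defs
begin


lemma subgrp_diff: "subgrp A \<Longrightarrow> x \<in> A \<Longrightarrow> y \<in> A \<Longrightarrow> x - y \<in> A"
  unfolding subgrp_def by (metis diff_conv_add_uminus)

lemma subgrp_0: "subgrp A \<Longrightarrow> 0 \<in> A" unfolding subgrp_def by blast
lemma subgrp_add: "subgrp A \<Longrightarrow> x \<in> A \<Longrightarrow> y \<in> A \<Longrightarrow> x + y \<in> A" unfolding subgrp_def by blast

lemma addhom_in: "addhom A B f \<Longrightarrow> x \<in> A \<Longrightarrow> f x \<in> B" unfolding addhom_def by blast
lemma addhom_add: "addhom A B f \<Longrightarrow> x \<in> A \<Longrightarrow> y \<in> A \<Longrightarrow> f (x + y) = f x + f y"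
  unfolding addhom_def by blast

lemma addhom_0: "subgrp A \<Longrightarrow> addhom A B f \<Longrightarrow> f 0 = 0"
  by (metis add_cancel_right_right addhom_add subgrp_0)

lemma addhom_diff: "subgrp A \<Longrightarrow> addhom A B f \<Longrightarrow> x \<in> A \<Longrightarrow> y \<in> A \<Longrightarrow> f (x - y) = f x - f y"
proof -
  assume a: "subgrp A" "addhom A B f" "x \<in> A" "y \<in> A"
  have "f x = f ((x - y) + y)" by simp
  also have "\<dots> = f (x - y) + f y" using a by (intro addhom_add) (auto intro: subgrp_diff)
  finally show ?thesis by (simp add: algebra_simps)
qed

lemma addhom_inj: "subgrp A \<Longrightarrow> addhom A B f \<Longrightarrow> (\<And>x. x \<in> A \<Longrightarrow> f x = 0 \<Longrightarrow> x = 0) \<Longrightarrow> inj_on f A"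
proof -
  assume s: "subgrp A" and h: "addhom A B f" and k: "\<And>x. x \<in> A \<Longrightarrow> f x = 0 \<Longrightarrow> x = 0"
  show ?thesis unfolding inj_on_def
  proof (intro ballI impI)
    fix x y assume x: "x \<in> A" and y: "y \<in> A" and e: "f x = f y"
    have "f (x - y) = 0" using addhom_diff[OF s h x y] e by simp
    then have "x - y = 0" using k subgrp_diff[OF s x y] by blast
    then show "x = y" by simp
  qed
qed

lemma funpow_in: "addhom A A t \<Longrightarrow> x \<in> A \<Longrightarrow> (t ^^ i) x \<in> A"
  by (induction i) (auto intro: addhom_in)

lemma funpow_hom: "addhom A A t \<Longrightarrow> addhom A A (t ^^ i)"
proof (induction i)
  case 0 then show ?case by (simp add: addhom_def)
next
  case (Suc i)
  then show ?case unfolding addhom_def using funpow_in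
    by (smt (verit, best) addhom_add addhom_in comp_apply funpow.simps(2))
qed

lemma funpow_fix: "t x = x \<Longrightarrow> (t ^^ i) x = x"
  by (induction i) auto

lemma funpow_comm: "(\<And>x. x \<in> A \<Longrightarrow> g (t x) = u (g x)) \<Longrightarrow> addhom A A t \<Longrightarrow> x \<in> A \<Longrightarrow> g ((t ^^ i) x) = (u ^^ i) (g x)"
proof (induction i)
  case (Suc i)
  have "(t ^^ i) x \<in> A" using Suc funpow_in by blast
  then show ?case using Suc by simp
qed simp

lemma Nop_Suc: "Nop (Suc p) t x = Nop p t x + (t ^^ p) x"
  unfolding Nop_def by simp

lemma Nop_in: "subgrp A \<Longrightarrow> addhom A A t \<Longrightarrow> x \<in> A \<Longrightarrow> Nop p t x \<in> A"
  by (induction p) (auto simp: Nop_Suc subgrp_0 Nop_def[of 0] intro: subgrp_add funpow_in)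

lemma Nop_add: "subgrp A \<Longrightarrow> addhom A A t \<Longrightarrow> x \<in> A \<Longrightarrow> y \<in> A \<Longrightarrow> Nop p t (x + y) = Nop p t x + Nop p t y"
proof (induction p)
  case 0 then show ?case by (simp add: Nop_def)
next
  case (Suc p)
  have "(t ^^ p) (x + y) = (t ^^ p) x + (t ^^ p) y" using Suc by (metis addhom_add funpow_hom)
  then show ?case using Suc by (simp add: Nop_Suc algebra_simps)
qed

lemma Nop_hom: "subgrp A \<Longrightarrow> addhom A A t \<Longrightarrow> addhom A A (Nop p t)"
  by (simp add: addhom_def Nop_in Nop_add)

lemma Nop_tele: "subgrp A \<Longrightarrow> addhom A A t \<Longrightarrow> x \<in> A \<Longrightarrow> t (Nop p t x) = Nop p t x - x + (t ^^ p) x"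
proof (induction p)
  case 0 then show ?case by (simp add: Nop_def addhom_0)
next
  case (Suc p)
  have "t (Nop (Suc p) t x) = t (Nop p t x) + t ((t ^^ p) x)"
    unfolding Nop_Suc using Suc by (intro addhom_add) (auto intro: Nop_in funpow_in)
  then show ?case using Suc by (simp add: Nop_Suc algebra_simps)
qed

lemma Nop_comm: "subgrp A \<Longrightarrow> addhom A A t \<Longrightarrow> addhom A B g \<Longrightarrow> (\<And>x. x \<in> A \<Longrightarrow> g (t x) = u (g x))
  \<Longrightarrow> x \<in> A \<Longrightarrow> g (Nop p t x) = Nop p u (g x)"
proof (induction p)
  case 0 then show ?case by (simp add: Nop_def addhom_0)
next
  case (Suc p)
  have "g (Nop (Suc p) t x) = g (Nop p t x) + g ((t ^^ p) x)"
    unfolding Nop_Suc using Suc by (intro addhom_add) (auto intro: Nop_in funpow_in)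
  then show ?case using Suc funpow_comm[of A g t u x p] by (simp add: Nop_Suc)
qed

lemma Nop_fix: "t x = x \<Longrightarrow> Nop p t x = pmul p x"
  unfolding Nop_def pmul_def by (simp add: funpow_fix)

lemma tdeg_simps[simp]: "tdeg V0 V1 d = d" "tdeg V1 V0 d = d" "tdeg V0 V2 d = d" "tdeg V2 V0 d = d"
  "tdeg V1 V2 d = (\<not> d)" "tdeg V2 V1 d = (\<not> d)"
  by (simp_all add: tdeg_def)



locale ksub =
  fixes p :: nat and C :: "'a::ab_group_add kcar" and \<alpha> :: "'a kmaps"
  assumes K: "Ksub p C \<alpha>"
begin

lemma Km: "Kmod p C \<alpha>" and Ke: "Kexact C \<alpha>"
  and z12: "\<And>d x. x \<in> C V2 d \<Longrightarrow> \<alpha> V1 V2 d x = 0"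
  and z21: "\<And>d x. x \<in> C V1 d \<Longrightarrow> \<alpha> V2 V1 d x = 0"
  using K unfolding Ksub_def by auto

lemma sg: "subgrp (C k d)" using Km unfolding Kmod_def by blast

lemma hom: "j \<noteq> k \<Longrightarrow> addhom (C k d) (C j (tdeg j k d)) (\<alpha> j k d)"
  using Km unfolding Kmod_def by blast

lemma h10: "addhom (C V0 d) (C V1 d) (\<alpha> V1 V0 d)" using hom[of V1 V0 d] by simp
lemma h01: "addhom (C V1 d) (C V0 d) (\<alpha> V0 V1 d)" using hom[of V0 V1 d] by simp
lemma h20: "addhom (C V0 d) (C V2 d) (\<alpha> V2 V0 d)" using hom[of V2 V0 d] by simp
lemma h02: "addhom (C V2 d) (C V0 d) (\<alpha> V0 V2 d)" using hom[of V0 V2 d] by simp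

lemma acz: "j \<noteq> k \<Longrightarrow> k \<noteq> m \<Longrightarrow> j \<noteq> m \<Longrightarrow> x \<in> C m d \<Longrightarrow> acomp \<alpha> j k m d x = 0"
  using Km unfolding Kmod_def by blast
lemma N0raw: "x \<in> C V0 d \<Longrightarrow> acomp \<alpha> V0 V1 V0 d x = Nop p (t0 \<alpha> d) x"
  using Km unfolding Kmod_def by blast

lemma c201: "y \<in> C V1 d \<Longrightarrow> \<alpha> V2 V0 d (\<alpha> V0 V1 d y) = 0"
  using acz[of V2 V0 V1 y d] by (simp add: acomp_def)
lemma c102: "z \<in> C V2 d \<Longrightarrow> \<alpha> V1 V0 d (\<alpha> V0 V2 d z) = 0"
  using acz[of V1 V0 V2 z d] by (simp add: acomp_def)
lemma N0: "x \<in> C V0 d \<Longrightarrow> \<alpha> V0 V1 d (\<alpha> V1 V0 d x) = Nop p (t0 \<alpha> d) x"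
  using N0raw[of x d] by (simp add: acomp_def)
lemma t0e: "t0 \<alpha> d x = x - \<alpha> V0 V2 d (\<alpha> V2 V0 d x)"
  unfolding t0_def acomp_def by simp

lemma ex: "\<And>j k m. exact_at C \<alpha> j k m \<Longrightarrow> (\<forall>d. {x \<in> C k d. \<alpha> m k d x = 0} = \<alpha> k j (tdeg k j d) ` C j (tdeg k j d))"
  unfolding exact_at_def by blast

lemma surj10: "y \<in> C V1 d \<Longrightarrow> \<exists>x\<in>C V0 d. y = \<alpha> V1 V0 d x"
proof -
  assume y: "y \<in> C V1 d"
  have "{x \<in> C V1 d. \<alpha> V2 V1 d x = 0} = \<alpha> V1 V0 d ` C V0 d"
    using ex[of V0 V1 V2] Ke unfolding Kexact_def by simp
  then show ?thesis using y z21 by blast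
qed

lemma surj20: "z \<in> C V2 d \<Longrightarrow> \<exists>x\<in>C V0 d. z = \<alpha> V2 V0 d x"
proof -
  assume y: "z \<in> C V2 d"
  have "{x \<in> C V2 d. \<alpha> V1 V2 d x = 0} = \<alpha> V2 V0 d ` C V0 d"
    using ex[of V0 V2 V1] Ke unfolding Kexact_def by simp
  then show ?thesis using y z12 by blast
qed

lemma ker02: "z \<in> C V2 d \<Longrightarrow> \<alpha> V0 V2 d z = 0 \<Longrightarrow> z = 0"
proof -
  assume y: "z \<in> C V2 d" "\<alpha> V0 V2 d z = 0"
  have "{x \<in> C V2 d. \<alpha> V0 V2 d x = 0} = \<alpha> V2 V1 (\<not>d) ` C V1 (\<not>d)"
    using ex[of V1 V2 V0] Ke unfolding Kexact_def by simp
  then obtain w where "w \<in> C V1 (\<not>d)" "z = \<alpha> V2 V1 (\<not>d) w" using y by blast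
  then show ?thesis using z21 by simp
qed

lemma ker01: "z \<in> C V1 d \<Longrightarrow> \<alpha> V0 V1 d z = 0 \<Longrightarrow> z = 0"
proof -
  assume y: "z \<in> C V1 d" "\<alpha> V0 V1 d z = 0"
  have "{x \<in> C V1 d. \<alpha> V0 V1 d x = 0} = \<alpha> V1 V2 (\<not>d) ` C V2 (\<not>d)"
    using ex[of V2 V1 V0] Ke unfolding Kexact_def by simp
  then obtain w where "w \<in> C V2 (\<not>d)" "z = \<alpha> V1 V2 (\<not>d) w" using y by blast
  then show ?thesis using z12 by simp
qed

lemma ker10: "x \<in> C V0 d \<Longrightarrow> \<alpha> V1 V0 d x = 0 \<Longrightarrow> \<exists>z\<in>C V2 d. x = \<alpha> V0 V2 d z"
proof -
  assume y: "x \<in> C V0 d" "\<alpha> V1 V0 d x = 0"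
  have "{x \<in> C V0 d. \<alpha> V1 V0 d x = 0} = \<alpha> V0 V2 d ` C V2 d"
    using ex[of V2 V0 V1] Ke unfolding Kexact_def by simp
  then show ?thesis using y by blast
qed

lemma ker20: "x \<in> C V0 d \<Longrightarrow> \<alpha> V2 V0 d x = 0 \<Longrightarrow> \<exists>z\<in>C V1 d. x = \<alpha> V0 V1 d z"
proof -
  assume y: "x \<in> C V0 d" "\<alpha> V2 V0 d x = 0"
  have "{x \<in> C V0 d. \<alpha> V2 V0 d x = 0} = \<alpha> V0 V1 d ` C V1 d"
    using ex[of V1 V0 V2] Ke unfolding Kexact_def by simp
  then show ?thesis using y by blast
qed

lemma inj01: "inj_on (\<alpha> V0 V1 d) (C V1 d)"
  using addhom_inj[OF sg h01] ker01 by blast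
lemma inj02: "inj_on (\<alpha> V0 V2 d) (C V2 d)"
  using addhom_inj[OF sg h02] ker02 by blast

lemma in10: "x \<in> C V0 d \<Longrightarrow> \<alpha> V1 V0 d x \<in> C V1 d" using h10 addhom_in by blast
lemma in01: "x \<in> C V1 d \<Longrightarrow> \<alpha> V0 V1 d x \<in> C V0 d" using h01 addhom_in by blast
lemma in20: "x \<in> C V0 d \<Longrightarrow> \<alpha> V2 V0 d x \<in> C V2 d" using h20 addhom_in by blast
lemma in02: "x \<in> C V2 d \<Longrightarrow> \<alpha> V0 V2 d x \<in> C V0 d" using h02 addhom_in by blast

lemma t0hom: "addhom (C V0 d) (C V0 d) (t0 \<alpha> d)"
  unfolding addhom_def t0e
proof (intro conjI ballI)
  fix x y assume x: "x \<in> C V0 d" and y: "y \<in> C V0 d"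
  show "x - \<alpha> V0 V2 d (\<alpha> V2 V0 d x) \<in> C V0 d" using x by (intro subgrp_diff sg in02 in20)
  have "\<alpha> V2 V0 d (x + y) = \<alpha> V2 V0 d x + \<alpha> V2 V0 d y" using x y h20 addhom_add by blast
  moreover have "\<alpha> V0 V2 d (\<alpha> V2 V0 d x + \<alpha> V2 V0 d y) = \<alpha> V0 V2 d (\<alpha> V2 V0 d x) + \<alpha> V0 V2 d (\<alpha> V2 V0 d y)"
    using x y h02 addhom_add in20 by blast
  ultimately show "x + y - \<alpha> V0 V2 d (\<alpha> V2 V0 d (x + y)) =
        x - \<alpha> V0 V2 d (\<alpha> V2 V0 d x) + (y - \<alpha> V0 V2 d (\<alpha> V2 V0 d y))" by simp
qed

lemma t0pow: "x \<in> C V0 d \<Longrightarrow> (t0 \<alpha> d ^^ p) x = x"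
proof -
  assume x: "x \<in> C V0 d"
  have "t0 \<alpha> d (Nop p (t0 \<alpha> d) x) = Nop p (t0 \<alpha> d) x - x + (t0 \<alpha> d ^^ p) x"
    using Nop_tele[OF sg t0hom x] .
  moreover have "t0 \<alpha> d (Nop p (t0 \<alpha> d) x) = Nop p (t0 \<alpha> d) x"
    unfolding t0e N0[OF x, symmetric] using c201[OF in10[OF x]] addhom_0[OF sg h02] by simp
  ultimately show ?thesis by (simp add: algebra_simps)
qed

lemma part1: "Smod p (C V0) (t0 \<alpha>) \<and> coh_trivial p (C V0) (t0 \<alpha>)"
proof
  show "Smod p (C V0) (t0 \<alpha>)" unfolding Smod_def using sg t0hom t0pow by blast
  show "coh_trivial p (C V0) (t0 \<alpha>)" unfolding coh_trivial_def
  proof (intro allI conjI)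
    fix d
    show "{x \<in> C V0 d. x - t0 \<alpha> d x = 0} = Nop p (t0 \<alpha> d) ` C V0 d"
    proof (intro equalityI subsetI)
      fix x assume "x \<in> {x \<in> C V0 d. x - t0 \<alpha> d x = 0}"
      then have x: "x \<in> C V0 d" and "\<alpha> V0 V2 d (\<alpha> V2 V0 d x) = 0" by (auto simp: t0e)
      then have "\<alpha> V2 V0 d x = 0" using ker02 in20 by blast
      then obtain y where y: "y \<in> C V1 d" "x = \<alpha> V0 V1 d y" using ker20 x by blast
      then obtain w where w: "w \<in> C V0 d" "y = \<alpha> V1 V0 d w" using surj10 by blast
      show "x \<in> Nop p (t0 \<alpha> d) ` C V0 d" using y w N0 by auto
    next
      fix x assume "x \<in> Nop p (t0 \<alpha> d) ` C V0 d"
      then obtain w where w: "w \<in> C V0 d" "x = Nop p (t0 \<alpha> d) w" by blast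
      then have xe: "x = \<alpha> V0 V1 d (\<alpha> V1 V0 d w)" using N0[OF w(1)] by simp
      then have "x \<in> C V0 d" using in01 in10 w(1) by blast
      moreover have "\<alpha> V2 V0 d x = 0" using xe c201 in10 w(1) by blast
      ultimately show "x \<in> {x \<in> C V0 d. x - t0 \<alpha> d x = 0}"
        using addhom_0[OF sg h02] by (simp add: t0e)
    qed
    show "(\<lambda>x. x - t0 \<alpha> d x) ` C V0 d = {x \<in> C V0 d. Nop p (t0 \<alpha> d) x = 0}"
    proof (intro equalityI subsetI)
      fix x assume "x \<in> (\<lambda>x. x - t0 \<alpha> d x) ` C V0 d"
      then obtain w where w: "w \<in> C V0 d" "x = \<alpha> V0 V2 d (\<alpha> V2 V0 d w)" by (auto simp: t0e)
      then have x: "x \<in> C V0 d" using in02 in20 by blast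
      show "x \<in> {x \<in> C V0 d. Nop p (t0 \<alpha> d) x = 0}"
        using x N0[OF x, symmetric] w c102 in20 addhom_0[OF sg h01] by auto
    next
      fix x assume "x \<in> {x \<in> C V0 d. Nop p (t0 \<alpha> d) x = 0}"
      then have x: "x \<in> C V0 d" and "\<alpha> V0 V1 d (\<alpha> V1 V0 d x) = 0" using N0 by auto
      then have "\<alpha> V1 V0 d x = 0" using ker01 in10 by blast
      then obtain z where z: "z \<in> C V2 d" "x = \<alpha> V0 V2 d z" using ker10 x by blast
      then obtain w where w: "w \<in> C V0 d" "z = \<alpha> V2 V0 d w" using surj20 by blast
      show "x \<in> (\<lambda>x. x - t0 \<alpha> d x) ` C V0 d" using z w by (auto simp: t0e)
    qed
  qed
qed

end



lemma Kmor_hom: "Kmor C \<alpha> D \<beta> f \<Longrightarrow> addhom (C k d) (D k d) (f k d)"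
  unfolding Kmor_def by blast
lemma Kmor_comm: "Kmor C \<alpha> D \<beta> f \<Longrightarrow> j \<noteq> k \<Longrightarrow> x \<in> C k d \<Longrightarrow> f j (tdeg j k d) (\<alpha> j k d x) = \<beta> j k d (f k d x)"
  unfolding Kmor_def by blast

locale kpair = A: ksub p C \<alpha> + B: ksub p D \<beta>
  for p and C :: "'a::ab_group_add kcar" and \<alpha> and D :: "'b::ab_group_add kcar" and \<beta>
begin

lemma part2: "Kmor C \<alpha> D \<beta> f \<Longrightarrow> Smor (C V0) (t0 \<alpha>) (D V0) (t0 \<beta>) (f V0)"
proof -
  assume f: "Kmor C \<alpha> D \<beta> f"
  have c: "f V0 d (t0 \<alpha> d x) = t0 \<beta> d (f V0 d x)" if x: "x \<in> C V0 d" for d x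
  proof -
    have "f V0 d (t0 \<alpha> d x) = f V0 d x - f V0 d (\<alpha> V0 V2 d (\<alpha> V2 V0 d x))"
      unfolding A.t0e using addhom_diff[OF A.sg Kmor_hom[OF f]] x A.in02 A.in20 by blast
    also have "f V0 d (\<alpha> V0 V2 d (\<alpha> V2 V0 d x)) = \<beta> V0 V2 d (\<beta> V2 V0 d (f V0 d x))"
      using Kmor_comm[OF f, of V0 V2 "\<alpha> V2 V0 d x" d] Kmor_comm[OF f, of V2 V0 x d] x A.in20 by simp
    finally show ?thesis by (simp add: B.t0e)
  qed
  show ?thesis unfolding Smor_def using Kmor_hom[OF f] c by blast
qed

lemma part4: "Kmor C \<alpha> D \<beta> f \<Longrightarrow> Kmor C \<alpha> D \<beta> f' \<Longrightarrow> (\<forall>d. \<forall>x\<in>C V0 d. f V0 d x = f' V0 d x) \<Longrightarrow>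
   x \<in> C k d \<Longrightarrow> f k d x = f' k d x"
proof -
  assume f: "Kmor C \<alpha> D \<beta> f" and f': "Kmor C \<alpha> D \<beta> f'" and e: "\<forall>d. \<forall>x\<in>C V0 d. f V0 d x = f' V0 d x"
    and x: "x \<in> C k d"
  show ?thesis
  proof (cases k)
    case V0 then show ?thesis using e x by simp
  next
    case V1
    then obtain w where w: "w \<in> C V0 d" "x = \<alpha> V1 V0 d w" using x A.surj10 by blast
    then show ?thesis using V1 Kmor_comm[OF f, of V1 V0 w d] Kmor_comm[OF f', of V1 V0 w d] e by simp
  next
    case V2
    then obtain w where w: "w \<in> C V0 d" "x = \<alpha> V2 V0 d w" using x A.surj20 by blast
    then show ?thesis using V2 Kmor_comm[OF f, of V2 V0 w d] Kmor_comm[OF f', of V2 V0 w d] e by simp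
  qed
qed

lemma part6inj: "Kmor C \<alpha> D \<beta> f \<Longrightarrow> (\<forall>d. inj_on (f V0 d) (C V0 d)) \<Longrightarrow> inj_on (f k d) (C k d)"
proof -
  assume f: "Kmor C \<alpha> D \<beta> f" and i: "\<forall>d. inj_on (f V0 d) (C V0 d)"
  show ?thesis
  proof (cases k)
    case V0 then show ?thesis using i by simp
  next
    case V1
    show ?thesis unfolding inj_on_def V1
    proof (intro ballI impI)
      fix x y assume x: "x \<in> C V1 d" and y: "y \<in> C V1 d" and e: "f V1 d x = f V1 d y"
      have "f V0 d (\<alpha> V0 V1 d x) = f V0 d (\<alpha> V0 V1 d y)"
        using Kmor_comm[OF f, of V0 V1 x d] Kmor_comm[OF f, of V0 V1 y d] x y e by simp
      then have "\<alpha> V0 V1 d x = \<alpha> V0 V1 d y" using i x y A.in01 inj_on_def by metis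
      then show "x = y" using A.inj01 x y inj_on_def by metis
    qed
  next
    case V2
    show ?thesis unfolding inj_on_def V2
    proof (intro ballI impI)
      fix x y assume x: "x \<in> C V2 d" and y: "y \<in> C V2 d" and e: "f V2 d x = f V2 d y"
      have "f V0 d (\<alpha> V0 V2 d x) = f V0 d (\<alpha> V0 V2 d y)"
        using Kmor_comm[OF f, of V0 V2 x d] Kmor_comm[OF f, of V0 V2 y d] x y e by simp
      then have "\<alpha> V0 V2 d x = \<alpha> V0 V2 d y" using i x y A.in02 inj_on_def by metis
      then show "x = y" using A.inj02 x y inj_on_def by metis
    qed
  qed
qed

lemma part6surj: "Kmor C \<alpha> D \<beta> f \<Longrightarrow> (\<forall>d. f V0 d ` C V0 d = D V0 d) \<Longrightarrow> f k d ` C k d = D k d"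
proof -
  assume f: "Kmor C \<alpha> D \<beta> f" and s: "\<forall>d. f V0 d ` C V0 d = D V0 d"
  have sub: "f k d ` C k d \<subseteq> D k d" using Kmor_hom[OF f] addhom_in by blast
  show ?thesis
  proof (cases k)
    case V0 then show ?thesis using s by simp
  next
    case V1
    have "D V1 d \<subseteq> f V1 d ` C V1 d"
    proof
      fix y assume "y \<in> D V1 d"
      then obtain x' where x': "x' \<in> D V0 d" "y = \<beta> V1 V0 d x'" using B.surj10 by blast
      then obtain x where x: "x \<in> C V0 d" "x' = f V0 d x" using s by blast
      have "y = f V1 d (\<alpha> V1 V0 d x)" using Kmor_comm[OF f, of V1 V0 x d] x x' by simp
      then show "y \<in> f V1 d ` C V1 d" using A.in10 x by blast
    qed
    then show ?thesis using sub V1 by blast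
  next
    case V2
    have "D V2 d \<subseteq> f V2 d ` C V2 d"
    proof
      fix y assume "y \<in> D V2 d"
      then obtain x' where x': "x' \<in> D V0 d" "y = \<beta> V2 V0 d x'" using B.surj20 by blast
      then obtain x where x: "x \<in> C V0 d" "x' = f V0 d x" using s by blast
      have "y = f V2 d (\<alpha> V2 V0 d x)" using Kmor_comm[OF f, of V2 V0 x d] x x' by simp
      then show "y \<in> f V2 d ` C V2 d" using A.in20 x by blast
    qed
    then show ?thesis using sub V2 by blast
  qed
qed

end



locale kfull = kpair p C \<alpha> D \<beta>
  for p and C :: "'a::ab_group_add kcar" and \<alpha> and D :: "'b::ab_group_add kcar" and \<beta> +
  fixes g :: "bool \<Rightarrow> 'a \<Rightarrow> 'b"
  assumes S: "Smor (C V0) (t0 \<alpha>) (D V0) (t0 \<beta>) g"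
begin

lemma gh: "addhom (C V0 d) (D V0 d) (g d)" using S unfolding Smor_def by blast
lemma gc: "x \<in> C V0 d \<Longrightarrow> g d (t0 \<alpha> d x) = t0 \<beta> d (g d x)" using S unfolding Smor_def by blast
lemma gin: "x \<in> C V0 d \<Longrightarrow> g d x \<in> D V0 d" using gh addhom_in by blast

lemma wd1: "w \<in> C V0 d \<Longrightarrow> w' \<in> C V0 d \<Longrightarrow> \<alpha> V1 V0 d w = \<alpha> V1 V0 d w' \<Longrightarrow>
  \<beta> V1 V0 d (g d w) = \<beta> V1 V0 d (g d w')"
proof -
  assume w: "w \<in> C V0 d" and w': "w' \<in> C V0 d" and e: "\<alpha> V1 V0 d w = \<alpha> V1 V0 d w'"
  have u: "w - w' \<in> C V0 d" using w w' A.sg subgrp_diff by blast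
  have "\<alpha> V1 V0 d (w - w') = 0" using addhom_diff[OF A.sg A.h10 w w'] e by simp
  then obtain z where z: "z \<in> C V2 d" "w - w' = \<alpha> V0 V2 d z" using A.ker10 u by blast
  then obtain v where v: "v \<in> C V0 d" "z = \<alpha> V2 V0 d v" using A.surj20 by blast
  have "w - w' = v - t0 \<alpha> d v" using z v by (simp add: A.t0e)
  then have "g d (w - w') = g d v - g d (t0 \<alpha> d v)"
    using addhom_diff[OF A.sg gh] v A.t0hom addhom_in by metis
  also have "\<dots> = \<beta> V0 V2 d (\<beta> V2 V0 d (g d v))" using gc[OF v(1)] by (simp add: B.t0e)
  finally have "\<beta> V1 V0 d (g d (w - w')) = 0" using B.c102 B.in20 gin v by simp
  then show ?thesis using addhom_diff[OF A.sg gh w w'] addhom_diff[OF B.sg B.h10 gin[OF w] gin[OF w']] by simp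
qed

lemma wd2: "w \<in> C V0 d \<Longrightarrow> w' \<in> C V0 d \<Longrightarrow> \<alpha> V2 V0 d w = \<alpha> V2 V0 d w' \<Longrightarrow>
  \<beta> V2 V0 d (g d w) = \<beta> V2 V0 d (g d w')"
proof -
  assume w: "w \<in> C V0 d" and w': "w' \<in> C V0 d" and e: "\<alpha> V2 V0 d w = \<alpha> V2 V0 d w'"
  have u: "w - w' \<in> C V0 d" using w w' A.sg subgrp_diff by blast
  have "\<alpha> V2 V0 d (w - w') = 0" using addhom_diff[OF A.sg A.h20 w w'] e by simp
  then obtain z where z: "z \<in> C V1 d" "w - w' = \<alpha> V0 V1 d z" using A.ker20 u by blast
  then obtain v where v: "v \<in> C V0 d" "z = \<alpha> V1 V0 d v" using A.surj10 by blast
  have e1: "w - w' = Nop p (t0 \<alpha> d) v" using z v A.N0 by simp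
  have e2: "g d (Nop p (t0 \<alpha> d) v) = Nop p (t0 \<beta> d) (g d v)"
    by (rule Nop_comm[where A="C V0 d" and t="t0 \<alpha> d" and B="D V0 d" and g="g d" and u="t0 \<beta> d", OF A.sg A.t0hom gh gc v(1)])
  have "g d (w - w') = Nop p (t0 \<beta> d) (g d v)" unfolding e1 e2 ..
  also have "\<dots> = \<beta> V0 V1 d (\<beta> V1 V0 d (g d v))" using B.N0 gin v by simp
  finally have "\<beta> V2 V0 d (g d (w - w')) = 0" using B.c201 B.in10 gin v by simp
  then show ?thesis using addhom_diff[OF A.sg gh w w'] addhom_diff[OF B.sg B.h20 gin[OF w] gin[OF w']] by simp
qed

definition ff :: "vtx \<Rightarrow> bool \<Rightarrow> 'a \<Rightarrow> 'b" where
  "ff k d x = (case k of V0 \<Rightarrow> g d x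
     | V1 \<Rightarrow> \<beta> V1 V0 d (g d (SOME w. w \<in> C V0 d \<and> \<alpha> V1 V0 d w = x))
     | V2 \<Rightarrow> \<beta> V2 V0 d (g d (SOME w. w \<in> C V0 d \<and> \<alpha> V2 V0 d w = x)))"

lemma ff1: "w \<in> C V0 d \<Longrightarrow> ff V1 d (\<alpha> V1 V0 d w) = \<beta> V1 V0 d (g d w)"
proof -
  assume w: "w \<in> C V0 d"
  let ?s = "SOME w'. w' \<in> C V0 d \<and> \<alpha> V1 V0 d w' = \<alpha> V1 V0 d w"
  have "?s \<in> C V0 d \<and> \<alpha> V1 V0 d ?s = \<alpha> V1 V0 d w" using w by (intro someI) blast
  then have "\<beta> V1 V0 d (g d ?s) = \<beta> V1 V0 d (g d w)" using w by (intro wd1) auto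
  then show ?thesis unfolding ff_def by simp
qed

lemma ff2: "w \<in> C V0 d \<Longrightarrow> ff V2 d (\<alpha> V2 V0 d w) = \<beta> V2 V0 d (g d w)"
proof -
  assume w: "w \<in> C V0 d"
  let ?s = "SOME w'. w' \<in> C V0 d \<and> \<alpha> V2 V0 d w' = \<alpha> V2 V0 d w"
  have "?s \<in> C V0 d \<and> \<alpha> V2 V0 d ?s = \<alpha> V2 V0 d w" using w by (intro someI) blast
  then have "\<beta> V2 V0 d (g d ?s) = \<beta> V2 V0 d (g d w)" using w by (intro wd2) auto
  then show ?thesis unfolding ff_def by simp
qed

lemma ff0: "ff V0 d x = g d x" unfolding ff_def by simp

lemma ffhom: "addhom (C k d) (D k d) (ff k d)"
proof (cases k)
  case V0 then show ?thesis using gh by (simp add: ff0[abs_def] ff_def)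
next
  case V1
  show ?thesis unfolding V1 addhom_def
  proof (intro conjI ballI)
    fix x y assume x: "x \<in> C V1 d" and y: "y \<in> C V1 d"
    obtain w where w: "w \<in> C V0 d" "x = \<alpha> V1 V0 d w" using x A.surj10 by blast
    obtain v where v: "v \<in> C V0 d" "y = \<alpha> V1 V0 d v" using y A.surj10 by blast
    show "ff V1 d x \<in> D V1 d" using w ff1 B.in10 gin by simp
    have wv: "w + v \<in> C V0 d" using w v A.sg subgrp_add by blast
    have "x + y = \<alpha> V1 V0 d (w + v)" using w v addhom_add[OF A.h10] by simp
    then have "ff V1 d (x + y) = \<beta> V1 V0 d (g d (w + v))" using ff1 wv by simp
    also have "\<dots> = \<beta> V1 V0 d (g d w) + \<beta> V1 V0 d (g d v)"
      using addhom_add[OF gh w(1) v(1)] addhom_add[OF B.h10 gin[OF w(1)] gin[OF v(1)]] by simp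
    finally show "ff V1 d (x + y) = ff V1 d x + ff V1 d y" using w v ff1 by simp
  qed
next
  case V2
  show ?thesis unfolding V2 addhom_def
  proof (intro conjI ballI)
    fix x y assume x: "x \<in> C V2 d" and y: "y \<in> C V2 d"
    obtain w where w: "w \<in> C V0 d" "x = \<alpha> V2 V0 d w" using x A.surj20 by blast
    obtain v where v: "v \<in> C V0 d" "y = \<alpha> V2 V0 d v" using y A.surj20 by blast
    show "ff V2 d x \<in> D V2 d" using w ff2 B.in20 gin by simp
    have wv: "w + v \<in> C V0 d" using w v A.sg subgrp_add by blast
    have "x + y = \<alpha> V2 V0 d (w + v)" using w v addhom_add[OF A.h20] by simp
    then have "ff V2 d (x + y) = \<beta> V2 V0 d (g d (w + v))" using ff2 wv by simp
    also have "\<dots> = \<beta> V2 V0 d (g d w) + \<beta> V2 V0 d (g d v)"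
      using addhom_add[OF gh w(1) v(1)] addhom_add[OF B.h20 gin[OF w(1)] gin[OF v(1)]] by simp
    finally show "ff V2 d (x + y) = ff V2 d x + ff V2 d y" using w v ff2 by simp
  qed
qed

lemma ff1z: "ff V1 d 0 = 0"
  using ff1[OF subgrp_0[OF A.sg]] addhom_0[OF A.sg A.h10] addhom_0[OF A.sg gh] addhom_0[OF B.sg B.h10]
  by simp
lemma ff2z: "ff V2 d 0 = 0"
  using ff2[OF subgrp_0[OF A.sg]] addhom_0[OF A.sg A.h20] addhom_0[OF A.sg gh] addhom_0[OF B.sg B.h20]
  by simp

lemma ffcomm: "j \<noteq> k \<Longrightarrow> x \<in> C k d \<Longrightarrow> ff j (tdeg j k d) (\<alpha> j k d x) = \<beta> j k d (ff k d x)"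
proof -
  assume jk: "j \<noteq> k" and x: "x \<in> C k d"
  have c10: "ff V1 d (\<alpha> V1 V0 d x) = \<beta> V1 V0 d (ff V0 d x)" if "x \<in> C V0 d" for x d
    using ff1 that ff0 by simp
  have c20: "ff V2 d (\<alpha> V2 V0 d x) = \<beta> V2 V0 d (ff V0 d x)" if "x \<in> C V0 d" for x d
    using ff2 that ff0 by simp
  have c01: "ff V0 d (\<alpha> V0 V1 d x) = \<beta> V0 V1 d (ff V1 d x)" if xin: "x \<in> C V1 d" for x d
  proof -
    obtain w where w: "w \<in> C V0 d" "x = \<alpha> V1 V0 d w" using xin A.surj10 by blast
    have "g d (\<alpha> V0 V1 d x) = g d (Nop p (t0 \<alpha> d) w)" using w A.N0 by simp
    also have "\<dots> = Nop p (t0 \<beta> d) (g d w)" using Nop_comm[where A="C V0 d" and t="t0 \<alpha> d" and B="D V0 d" and g="g d" and u="t0 \<beta> d", OF A.sg A.t0hom gh gc w(1)] .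
    also have "\<dots> = \<beta> V0 V1 d (\<beta> V1 V0 d (g d w))" using B.N0 gin w by simp
    finally show ?thesis using w ff1 ff0 by simp
  qed
  have c02: "ff V0 d (\<alpha> V0 V2 d x) = \<beta> V0 V2 d (ff V2 d x)" if xin: "x \<in> C V2 d" for x d
  proof -
    obtain w where w: "w \<in> C V0 d" "x = \<alpha> V2 V0 d w" using xin A.surj20 by blast
    have "g d (\<alpha> V0 V2 d x) = g d (w - t0 \<alpha> d w)" using w by (simp add: A.t0e)
    also have "\<dots> = g d w - g d (t0 \<alpha> d w)"
      using addhom_diff[OF A.sg gh] w A.t0hom addhom_in by metis
    also have "\<dots> = \<beta> V0 V2 d (\<beta> V2 V0 d (g d w))" using gc[OF w(1)] by (simp add: B.t0e)
    finally show ?thesis using w ff2 ff0 by simp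
  qed
  have c12: "ff V1 (\<not> d) (\<alpha> V1 V2 d x) = \<beta> V1 V2 d (ff V2 d x)" if xin: "x \<in> C V2 d" for x d
  proof -
    have "ff V2 d x \<in> D V2 d" using ffhom xin addhom_in by blast
    then show ?thesis using A.z12[OF xin] B.z12 ff1z by simp
  qed
  have c21: "ff V2 (\<not> d) (\<alpha> V2 V1 d x) = \<beta> V2 V1 d (ff V1 d x)" if xin: "x \<in> C V1 d" for x d
  proof -
    have "ff V1 d x \<in> D V1 d" using ffhom xin addhom_in by blast
    then show ?thesis using A.z21[OF xin] B.z21 ff2z by simp
  qed
  show ?thesis using jk x c10 c20 c01 c02 c12 c21 by (cases j; cases k) auto
qed

lemma part3: "\<exists>f. Kmor C \<alpha> D \<beta> f \<and> (\<forall>d. \<forall>x\<in>C V0 d. f V0 d x = g d x)"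
  apply (rule exI[of _ ff])
  unfolding Kmor_def using ffhom ffcomm ff0 by blast

end



lemma ker_subgrp: "subgrp A \<Longrightarrow> addhom A B h \<Longrightarrow> subgrp {x \<in> A. h x = 0}"
proof -
  assume s: "subgrp A" and h: "addhom A B h"
  show ?thesis unfolding subgrp_def
  proof (intro conjI ballI)
    show "0 \<in> {x \<in> A. h x = 0}" using s h addhom_0 subgrp_0 by blast
  next
    fix x y assume "x \<in> {x \<in> A. h x = 0}" "y \<in> {x \<in> A. h x = 0}"
    then show "x + y \<in> {x \<in> A. h x = 0}" using s h subgrp_add addhom_add by fastforce
  next
    fix x assume x: "x \<in> {x \<in> A. h x = 0}"
    have "h (0 - x) = h 0 - h x" using x s h addhom_diff subgrp_0 by blast
    then show "- x \<in> {x \<in> A. h x = 0}" using x s h addhom_0 unfolding subgrp_def by auto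
  qed
qed

locale smod =
  fixes p :: nat and X :: "bool \<Rightarrow> 'a::ab_group_add set" and t
  assumes Sm: "Smod p X t" and ct: "coh_trivial p X t"
begin

lemma sg: "subgrp (X d)" and th: "addhom (X d) (X d) (t d)" and tp: "x \<in> X d \<Longrightarrow> (t d ^^ p) x = x"
  using Sm unfolding Smod_def by auto

lemma ct1: "{x \<in> X d. x - t d x = 0} = Nop p (t d) ` X d"
  and ct2: "(\<lambda>x. x - t d x) ` X d = {x \<in> X d. Nop p (t d) x = 0}"
  using ct unfolding coh_trivial_def by auto

lemma uh: "addhom (X d) (X d) (\<lambda>x. x - t d x)"
  unfolding addhom_def
proof (intro conjI ballI)
  fix x y assume x: "x \<in> X d" and y: "y \<in> X d"
  show "x - t d x \<in> X d" using x sg th subgrp_diff addhom_in by blast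
  have "t d (x + y) = t d x + t d y" using x y th addhom_add by blast
  then show "x + y - t d (x + y) = x - t d x + (y - t d y)" by (simp add: algebra_simps)
qed

lemma Nh: "addhom (X d) (X d) (Nop p (t d))" using Nop_hom[OF sg th] .

lemma Nfix: "x \<in> X d \<Longrightarrow> t d (Nop p (t d) x) = Nop p (t d) x"
  using Nop_tele[OF sg th] tp by simp

lemma Nu: "x \<in> X d \<Longrightarrow> Nop p (t d) (x - t d x) = 0"
proof -
  assume x: "x \<in> X d"
  have "Nop p (t d) (x - t d x) = Nop p (t d) x - Nop p (t d) (t d x)"
    using addhom_diff[OF sg Nh] x th addhom_in by blast
  also have "Nop p (t d) (t d x) = t d (Nop p (t d) x)"
    by (rule sym, rule Nop_comm[where A="X d" and t="t d" and B="X d" and g="t d" and u="t d", OF sg th th])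
      (simp_all add: x)
  finally show ?thesis using Nfix x by simp
qed

definition CC :: "'a kcar" where
  "CC k d = (if k = V0 then X d else if k = V1 then {x \<in> X d. x - t d x = 0}
     else {x \<in> X d. Nop p (t d) x = 0})"

definition aa :: "'a kmaps" where
  "aa j k d x = (if j = V0 \<and> k = V1 then x else if j = V1 \<and> k = V0 then Nop p (t d) x
     else if j = V0 \<and> k = V2 then x else if j = V2 \<and> k = V0 then x - t d x else 0)"

lemma CC_simps[simp]: "CC V0 d = X d" "CC V1 d = {x \<in> X d. x - t d x = 0}"
  "CC V2 d = {x \<in> X d. Nop p (t d) x = 0}" unfolding CC_def by auto

lemma aa_simps[simp]: "aa V0 V1 d x = x" "aa V1 V0 d x = Nop p (t d) x" "aa V0 V2 d x = x"
  "aa V2 V0 d x = x - t d x" "aa V1 V2 d x = 0" "aa V2 V1 d x = 0"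
  unfolding aa_def by auto

lemma t0a: "t0 aa d = t d" by (rule ext) (simp add: t0_def acomp_def)
lemma s1a: "s1 aa d = (\<lambda>x. x)" by (rule ext) (simp add: s1_def acomp_def)
lemma t2a: "t2 aa d = t d" by (rule ext) (simp add: t2_def acomp_def)
lemma s2a: "s2 aa d = (\<lambda>x. x)" by (rule ext) (simp add: s2_def acomp_def)

lemma CCsg: "subgrp (CC k d)"
  using sg ker_subgrp[OF sg uh] ker_subgrp[OF sg Nh] by (cases k) auto

lemma hom0: "addhom A B (\<lambda>x. 0::'a) \<longleftrightarrow> (A = {} \<or> 0 \<in> B)"
  unfolding addhom_def by auto

lemma CCne: "0 \<in> CC k d" using CCsg subgrp_0 by blast

lemma Kmod: "Kmod p CC aa"
  unfolding Kmod_def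
proof (intro conjI allI impI ballI)
  fix k :: vtx and d :: bool show "subgrp (CC k d)" by (rule CCsg)
next
  fix j k :: vtx and d :: bool assume jk: "j \<noteq> k"
  have h01: "addhom (CC V1 d) (CC V0 d) (aa V0 V1 d)" using sg unfolding addhom_def by auto
  have h02: "addhom (CC V2 d) (CC V0 d) (aa V0 V2 d)" using sg unfolding addhom_def by auto
  have h10: "addhom (CC V0 d) (CC V1 d) (aa V1 V0 d)"
    using Nh Nfix unfolding addhom_def by auto
  have h20: "addhom (CC V0 d) (CC V2 d) (aa V2 V0 d)"
    using uh Nu unfolding addhom_def by auto
  have h12: "addhom (CC V2 d) (CC V1 (\<not>d)) (aa V1 V2 d)"
    using CCne[of V1 "\<not>d"] by (simp add: addhom_def del: CC_simps)
  have h21: "addhom (CC V1 d) (CC V2 (\<not>d)) (aa V2 V1 d)"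
    using CCne[of V2 "\<not>d"] by (simp add: addhom_def del: CC_simps)
  show "addhom (CC k d) (CC j (tdeg j k d)) (aa j k d)"
    using jk h01 h02 h10 h20 h12 h21 by (cases j; cases k) simp_all
next
  fix j k m :: vtx and d :: bool and x assume jkm: "j \<noteq> k \<and> k \<noteq> m \<and> j \<noteq> m" and x: "x \<in> CC m d"
  show "acomp aa j k m d x = 0"
    using jkm x by (cases j; cases k; cases m) (simp_all add: acomp_def)
next
  fix d :: bool and x assume "x \<in> CC V0 d"
  show "acomp aa V0 V1 V0 d x = Nop p (t0 aa d) x" by (simp add: acomp_def t0a)
next
  fix d :: bool and x assume x: "x \<in> CC V1 d"
  then have "t d x = x" by simp
  then show "acomp aa V1 V0 V1 d x = Nop p (s1 aa d) x"
    by (simp add: acomp_def s1a Nop_fix)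
next
  fix d :: bool and x assume x: "x \<in> CC V2 d"
  then show "Nop p (t2 aa d) x + Nop p (s2 aa d) x = pmul p x"
    by (simp add: t2a s2a Nop_fix)
qed

lemma Kexact: "Kexact CC aa"
  unfolding Kexact_def exact_at_def
proof (intro conjI allI)
  fix d
  show "{x \<in> CC V1 d. aa V2 V1 d x = 0} = aa V1 V0 (tdeg V1 V0 d) ` CC V0 (tdeg V1 V0 d)"
    using ct1 by simp
  show "{x \<in> CC V2 d. aa V0 V2 d x = 0} = aa V2 V1 (tdeg V2 V1 d) ` CC V1 (tdeg V2 V1 d)"
    using CCne[of V2 d] CCne[of V1 "\<not> d"] by (auto simp del: CC_simps)
  show "{x \<in> CC V0 d. aa V1 V0 d x = 0} = aa V0 V2 (tdeg V0 V2 d) ` CC V2 (tdeg V0 V2 d)"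
    by simp
  show "{x \<in> CC V2 d. aa V1 V2 d x = 0} = aa V2 V0 (tdeg V2 V0 d) ` CC V0 (tdeg V2 V0 d)"
    using ct2 by simp
  show "{x \<in> CC V1 d. aa V0 V1 d x = 0} = aa V1 V2 (tdeg V1 V2 d) ` CC V2 (tdeg V1 V2 d)"
    using CCne[of V1 d] CCne[of V2 "\<not> d"] by (auto simp del: CC_simps)
  show "{x \<in> CC V0 d. aa V2 V0 d x = 0} = aa V0 V1 (tdeg V0 V1 d) ` CC V1 (tdeg V0 V1 d)"
    by simp
qed

lemma part5: "\<exists>(C::'a kcar) \<alpha> g. Ksub p C \<alpha> \<and> Smor (C V0) (t0 \<alpha>) X t g \<and>
          (\<forall>d. bij_betw (g d) (C V0 d) (X d))"
proof (intro exI conjI)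
  show "Ksub p CC aa" unfolding Ksub_def using Kmod Kexact by simp
  show "Smor (CC V0) (t0 aa) X t (\<lambda>d x. x)" unfolding Smor_def addhom_def t0a by simp
  show "\<forall>d. bij_betw (\<lambda>x. x) (CC V0 d) (X d)" by (simp add: bij_betw_def)
qed

end



lemma G1: "\<forall>(C::'a::ab_group_add kcar) \<alpha>. Ksub p C \<alpha> \<longrightarrow>
       Smod p (C V0) (t0 \<alpha>) \<and> coh_trivial p (C V0) (t0 \<alpha>)"
  using ksub.part1 unfolding ksub_def by blast

lemma G2: "\<forall>(C::'a::ab_group_add kcar) \<alpha> (D::'b::ab_group_add kcar) \<beta> f.
       Ksub p C \<alpha> \<and> Ksub p D \<beta> \<and> Kmor C \<alpha> D \<beta> f \<longrightarrow>
       Smor (C V0) (t0 \<alpha>) (D V0) (t0 \<beta>) (f V0)"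
  using kpair.part2 unfolding kpair_def ksub_def by blast

lemma G3: "\<forall>(C::'a::ab_group_add kcar) \<alpha> (D::'b::ab_group_add kcar) \<beta> g.
       Ksub p C \<alpha> \<and> Ksub p D \<beta> \<and> Smor (C V0) (t0 \<alpha>) (D V0) (t0 \<beta>) g \<longrightarrow>
       (\<exists>f. Kmor C \<alpha> D \<beta> f \<and> (\<forall>d. \<forall>x\<in>C V0 d. f V0 d x = g d x))"
proof (intro allI impI)
  fix C :: "'a::ab_group_add kcar" and \<alpha> and D :: "'b::ab_group_add kcar" and \<beta> g
  assume h: "Ksub p C \<alpha> \<and> Ksub p D \<beta> \<and> Smor (C V0) (t0 \<alpha>) (D V0) (t0 \<beta>) g"
  have "kfull p C \<alpha> D \<beta> g" unfolding kfull_def kfull_axioms_def kpair_def ksub_def using h by blast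
  then show "\<exists>f. Kmor C \<alpha> D \<beta> f \<and> (\<forall>d. \<forall>x\<in>C V0 d. f V0 d x = g d x)" by (rule kfull.part3)
qed

lemma G4: "\<forall>(C::'a::ab_group_add kcar) \<alpha> (D::'b::ab_group_add kcar) \<beta> f f'.
       Ksub p C \<alpha> \<and> Ksub p D \<beta> \<and> Kmor C \<alpha> D \<beta> f \<and> Kmor C \<alpha> D \<beta> f' \<and>
       (\<forall>d. \<forall>x\<in>C V0 d. f V0 d x = f' V0 d x) \<longrightarrow>
       (\<forall>k d. \<forall>x\<in>C k d. f k d x = f' k d x)"
proof (intro allI impI ballI)
  fix C :: "'a::ab_group_add kcar" and \<alpha> and D :: "'b::ab_group_add kcar" and \<beta> f f' k d x
  assume h: "Ksub p C \<alpha> \<and> Ksub p D \<beta> \<and> Kmor C \<alpha> D \<beta> f \<and> Kmor C \<alpha> D \<beta> f' \<and>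
       (\<forall>d. \<forall>x\<in>C V0 d. f V0 d x = f' V0 d x)" and x: "x \<in> C k d"
  have "kpair p C \<alpha> D \<beta>" unfolding kpair_def ksub_def using h by blast
  then show "f k d x = f' k d x" using kpair.part4 h x by blast
qed

lemma G5: "\<forall>(X::bool \<Rightarrow> 'a::ab_group_add set) t. Smod p X t \<and> coh_trivial p X t \<longrightarrow>
       (\<exists>(C::'a kcar) \<alpha> g. Ksub p C \<alpha> \<and> Smor (C V0) (t0 \<alpha>) X t g \<and>
          (\<forall>d. bij_betw (g d) (C V0 d) (X d)))"
  using smod.part5 unfolding smod_def by blast

lemma G6: "\<forall>(C::'a::ab_group_add kcar) \<alpha> (D::'b::ab_group_add kcar) \<beta> f.
       Ksub p C \<alpha> \<and> Ksub p D \<beta> \<and> Kmor C \<alpha> D \<beta> f \<longrightarrow>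
       ((\<forall>k d. inj_on (f k d) (C k d)) \<longleftrightarrow> (\<forall>d. inj_on (f V0 d) (C V0 d))) \<and>
       ((\<forall>k d. f k d ` C k d = D k d) \<longleftrightarrow> (\<forall>d. f V0 d ` C V0 d = D V0 d))"
proof (intro allI impI)
  fix C :: "'a::ab_group_add kcar" and \<alpha> and D :: "'b::ab_group_add kcar" and \<beta> f
  assume h: "Ksub p C \<alpha> \<and> Ksub p D \<beta> \<and> Kmor C \<alpha> D \<beta> f"
  have k: "kpair p C \<alpha> D \<beta>" unfolding kpair_def ksub_def using h by blast
  have f: "Kmor C \<alpha> D \<beta> f" using h by blast
  have i: "(\<forall>d. inj_on (f V0 d) (C V0 d)) \<Longrightarrow> inj_on (f k d) (C k d)" for k d
    using kpair.part6inj[OF k f] by blast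
  have s: "(\<forall>d. f V0 d ` C V0 d = D V0 d) \<Longrightarrow> f k d ` C k d = D k d" for k d
    using kpair.part6surj[OF k f] by blast
  show "((\<forall>k d. inj_on (f k d) (C k d)) \<longleftrightarrow> (\<forall>d. inj_on (f V0 d) (C V0 d))) \<and>
       ((\<forall>k d. f k d ` C k d = D k d) \<longleftrightarrow> (\<forall>d. f V0 d ` C V0 d = D V0 d))"
  proof (rule conjI)
    show "(\<forall>k d. inj_on (f k d) (C k d)) \<longleftrightarrow> (\<forall>d. inj_on (f V0 d) (C V0 d))"
    proof
      assume "\<forall>k d. inj_on (f k d) (C k d)"
      then show "\<forall>d. inj_on (f V0 d) (C V0 d)" by simp
    next
      assume a: "\<forall>d. inj_on (f V0 d) (C V0 d)"
      show "\<forall>k d. inj_on (f k d) (C k d)" using i[OF a] by simp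
    qed
    show "(\<forall>k d. f k d ` C k d = D k d) \<longleftrightarrow> (\<forall>d. f V0 d ` C V0 d = D V0 d)"
    proof
      assume "\<forall>k d. f k d ` C k d = D k d"
      then show "\<forall>d. f V0 d ` C V0 d = D V0 d" by simp
    next
      assume a: "\<forall>d. f V0 d ` C V0 d = D V0 d"
      show "\<forall>k d. f k d ` C k d = D k d" using s[OF a] by simp
    qed
  qed
qed


theorem corollary8p2:
  fixes p :: nat
  assumes "prime p"
  shows
  "\<comment> \<open>the functor M \<mapsto> (M_0, t_0) lands in graded cohomologically trivial S-modules\<close>
   (\<forall>(C::'a::ab_group_add kcar) \<alpha>. Ksub p C \<alpha> \<longrightarrow>
       Smod p (C V0) (t0 \<alpha>) \<and> coh_trivial p (C V0) (t0 \<alpha>)) \<and>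
   \<comment> \<open>and on morphisms f \<mapsto> f_0\<close>
   (\<forall>(C::'a kcar) \<alpha> (D::'b::ab_group_add kcar) \<beta> f.
       Ksub p C \<alpha> \<and> Ksub p D \<beta> \<and> Kmor C \<alpha> D \<beta> f \<longrightarrow>
       Smor (C V0) (t0 \<alpha>) (D V0) (t0 \<beta>) (f V0)) \<and>
   \<comment> \<open>full\<close>
   (\<forall>(C::'a kcar) \<alpha> (D::'b kcar) \<beta> g.
       Ksub p C \<alpha> \<and> Ksub p D \<beta> \<and> Smor (C V0) (t0 \<alpha>) (D V0) (t0 \<beta>) g \<longrightarrow>
       (\<exists>f. Kmor C \<alpha> D \<beta> f \<and> (\<forall>d. \<forall>x\<in>C V0 d. f V0 d x = g d x))) \<and>
   \<comment> \<open>faithful\<close>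
   (\<forall>(C::'a kcar) \<alpha> (D::'b kcar) \<beta> f f'.
       Ksub p C \<alpha> \<and> Ksub p D \<beta> \<and> Kmor C \<alpha> D \<beta> f \<and> Kmor C \<alpha> D \<beta> f' \<and>
       (\<forall>d. \<forall>x\<in>C V0 d. f V0 d x = f' V0 d x) \<longrightarrow>
       (\<forall>k d. \<forall>x\<in>C k d. f k d x = f' k d x)) \<and>
   \<comment> \<open>essentially surjective\<close>
   (\<forall>(X::bool \<Rightarrow> 'a set) t. Smod p X t \<and> coh_trivial p X t \<longrightarrow>
       (\<exists>(C::'a kcar) \<alpha> g. Ksub p C \<alpha> \<and> Smor (C V0) (t0 \<alpha>) X t g \<and>
          (\<forall>d. bij_betw (g d) (C V0 d) (X d)))) \<and>
   \<comment> \<open>injectivity / surjectivity is detected on the 0-component\<close>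
   (\<forall>(C::'a kcar) \<alpha> (D::'b kcar) \<beta> f.
       Ksub p C \<alpha> \<and> Ksub p D \<beta> \<and> Kmor C \<alpha> D \<beta> f \<longrightarrow>
       ((\<forall>k d. inj_on (f k d) (C k d)) \<longleftrightarrow> (\<forall>d. inj_on (f V0 d) (C V0 d))) \<and>
       ((\<forall>k d. f k d ` C k d = D k d) \<longleftrightarrow> (\<forall>d. f V0 d ` C V0 d = D V0 d)))"
    by (rule conjI[OF G1 conjI[OF G2 conjI[OF G3 conjI[OF G4 conjI[OF G5 G6]]]]])

end
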